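(* Let $E$ be a Stone space with at least five points. Then the graph $\mathscr{C}(E)$ is connected. Moreover, if $E$ is finite then $\mathscr{C}(E)$ has diameter at most four, while if $E$ is infinite then $\mathscr{C}(E)$ has diameter exactly two.
   Context: A Stone space is a compact, Hausdorff, totally disconnected topological space. A cut of $E$ is an unordered partition of $E$ into two disjoint clopen sets $U,V$, written $U\sqcup V$. A cut is non-peripheral if each of $U$ and $V$ contains at least two points. Two cuts $U\sqcup V$ and $U'\sqcup V'$ cross if all four sets $U\cap U'$, $U\cap V'$, $V\cap U'$, $V\cap V'$ are nonempty; otherwise they are compatible. The complex of cuts $\mathscr{C}(E)$ is the simplicial graph whose vertices are the non-peripheral cuts of $E$, with an edge between two distinct cuts whenever they are compatible. *)

theory Defs
  imports "HOL-Analysis.Analysis" "HOL-Library.Extended_Nat"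
begin

definition totally_disconnected_space :: "'a topology \<Rightarrow> bool" where
  "totally_disconnected_space X \<longleftrightarrow>
     (\<forall>S. S \<subseteq> topspace X \<and> connectedin X S \<longrightarrow> (\<forall>a\<in>S. \<forall>b\<in>S. a = b))"

definition stone_space :: "'a topology \<Rightarrow> bool" where
  "stone_space X \<longleftrightarrow> compact_space X \<and> Hausdorff_space X \<and> totally_disconnected_space X"

definition is_cut :: "'a topology \<Rightarrow> 'a set set \<Rightarrow> bool" where
  "is_cut X c \<longleftrightarrow> (\<exists>U V. c = {U, V} \<and> U \<inter> V = {} \<and> U \<union> V = topspace X \<and>
       openin X U \<and> closedin X U \<and> openin X V \<and> closedin X V)"

definition nonperipheral_cut :: "'a topology \<Rightarrow> 'a set set \<Rightarrow> bool" where
  "nonperipheral_cut X c \<longleftrightarrow> (\<exists>U V. c = {U, V} \<and> U \<inter> V = {} \<and> U \<union> V = topspace X \<and>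
       openin X U \<and> closedin X U \<and> openin X V \<and> closedin X V \<and>
       (\<exists>x y. x \<in> U \<and> y \<in> U \<and> x \<noteq> y) \<and> (\<exists>x y. x \<in> V \<and> y \<in> V \<and> x \<noteq> y))"

definition cut_vertices :: "'a topology \<Rightarrow> 'a set set set" where
  "cut_vertices X = {c. nonperipheral_cut X c}"

definition cuts_cross :: "'a set set \<Rightarrow> 'a set set \<Rightarrow> bool" where
  "cuts_cross c d \<longleftrightarrow> (\<forall>A\<in>c. \<forall>B\<in>d. A \<inter> B \<noteq> {})"

definition cuts_compatible :: "'a set set \<Rightarrow> 'a set set \<Rightarrow> bool" where
  "cuts_compatible c d \<longleftrightarrow> \<not> cuts_cross c d"

definition cut_adj :: "'a topology \<Rightarrow> 'a set set \<Rightarrow> 'a set set \<Rightarrow> bool" where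
  "cut_adj X c d \<longleftrightarrow> c \<in> cut_vertices X \<and> d \<in> cut_vertices X \<and> c \<noteq> d \<and> cuts_compatible c d"

definition cut_walk :: "'a topology \<Rightarrow> 'a set set \<Rightarrow> 'a set set \<Rightarrow> nat \<Rightarrow> bool" where
  "cut_walk X c d n \<longleftrightarrow> (\<exists>p :: nat \<Rightarrow> 'a set set. p 0 = c \<and> p n = d \<and>
       (\<forall>i\<le>n. p i \<in> cut_vertices X) \<and> (\<forall>i<n. cut_adj X (p i) (p (Suc i))))"

text \<open>Graph distance (infinity if no walk exists).\<close>
definition cut_dist :: "'a topology \<Rightarrow> 'a set set \<Rightarrow> 'a set set \<Rightarrow> enat" where
  "cut_dist X c d = (INF n \<in> {n. cut_walk X c d n}. enat n)"

definition cut_graph_connected :: "'a topology \<Rightarrow> bool" where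
  "cut_graph_connected X \<longleftrightarrow>
     (\<forall>c\<in>cut_vertices X. \<forall>d\<in>cut_vertices X. \<exists>n. cut_walk X c d n)"

definition cut_graph_diameter :: "'a topology \<Rightarrow> enat" where
  "cut_graph_diameter X = (SUP c \<in> cut_vertices X. SUP d \<in> cut_vertices X. cut_dist X c d)"

end

theory Submission
  imports Defs
begin

lemma sep_clopen:
  assumes "stone_space E" "x \<in> topspace E" "y \<in> topspace E" "x \<noteq> y"
  shows "\<exists>T. openin E T \<and> closedin E T \<and> x \<in> T \<and> y \<notin> T"
proof (rule ccontr)
  assume "\<not> ?thesis"
  hence "quasi_component_of E x y" using assms unfolding quasi_component_of_def by blast
  moreover have "quasi_component_of E x = connected_component_of E x"
    by (rule quasi_eq_connected_component_of) (use assms(1) in \<open>auto simp: stone_space_def\<close>)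
  ultimately have "connected_component_of E x y" by simp
  then obtain T where "connectedin E T" "x \<in> T" "y \<in> T" unfolding connected_component_of_def by blast
  thus False using assms(1,4) connectedin_subset_topspace
    unfolding stone_space_def totally_disconnected_space_def by blast
qed

lemma np_cutI:
  assumes "openin E A" "closedin E A" "x \<in> A" "y \<in> A" "x \<noteq> y"
    "u \<in> topspace E - A" "v \<in> topspace E - A" "u \<noteq> v"
  shows "nonperipheral_cut E {A, topspace E - A}"
  unfolding nonperipheral_cut_def
  apply (rule exI[of _ A], rule exI[of _ "topspace E - A"])
  using assms openin_subset[OF assms(1)] by (auto intro: openin_diff closedin_diff)

lemma np_cutD:
  assumes "nonperipheral_cut E c" "A \<in> c"
  shows "openin E A \<and> closedin E A \<and> c = {A, topspace E - A} \<and> A \<subseteq> topspace E \<and>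
     (\<exists>x y. x \<in> A \<and> y \<in> A \<and> x \<noteq> y) \<and> (\<exists>x y. x \<in> topspace E - A \<and> y \<in> topspace E - A \<and> x \<noteq> y)"
proof -
  obtain U V where *: "c = {U, V}" "U \<inter> V = {}" "U \<union> V = topspace E"
       "openin E U" "closedin E U" "openin E V" "closedin E V"
       "(\<exists>x y. x \<in> U \<and> y \<in> U \<and> x \<noteq> y)" "(\<exists>x y. x \<in> V \<and> y \<in> V \<and> x \<noteq> y)"
    using assms(1) unfolding nonperipheral_cut_def by blast
  have "V = topspace E - U" "U = topspace E - V" using *(2,3) by auto
  thus ?thesis using * assms(2) by auto
qed

lemma mid:
  assumes c: "nonperipheral_cut E c" and d: "nonperipheral_cut E d" and cr: "cuts_cross c d"
    and A: "A \<in> c" and B: "B \<in> d" and xy: "x \<in> A \<inter> B" "y \<in> A \<inter> B" "x \<noteq> y"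
  shows "\<exists>w. cut_adj E c w \<and> cut_adj E w d"
proof -
  let ?S = "topspace E"
  note cA = np_cutD[OF c A] and dB = np_cutD[OF d B]
  have ceq: "c = {A, ?S - A}" and deq: "d = {B, ?S - B}" using cA dB by auto
  have cr': "cuts_cross {A, ?S - A} {B, ?S - B}" using cr ceq deq by simp
  have "A \<inter> (?S - B) \<noteq> {}" "(?S - A) \<inter> B \<noteq> {}"
    using cr' unfolding cuts_cross_def by simp_all
  then obtain u v where uv: "u \<in> A" "u \<in> ?S" "u \<notin> B" "v \<in> B" "v \<in> ?S" "v \<notin> A" by blast
  let ?W = "A \<inter> B"
  have wo: "openin E ?W" "closedin E ?W" using cA dB by auto
  have w: "nonperipheral_cut E {?W, ?S - ?W}"
    by (rule np_cutI[OF wo xy(1) xy(2) xy(3), of u v]) (use uv in auto)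
  have n1: "{?W, ?S - ?W} \<noteq> c"
  proof
    assume "{?W, ?S - ?W} = c"
    hence "?W = A \<or> ?W = ?S - A" using ceq by (auto simp: doubleton_eq_iff)
    thus False using uv xy by blast
  qed
  have n2: "{?W, ?S - ?W} \<noteq> d"
  proof
    assume "{?W, ?S - ?W} = d"
    hence "?W = B \<or> ?W = ?S - B" using deq by (auto simp: doubleton_eq_iff)
    thus False using uv xy by blast
  qed
  have "cuts_compatible c {?W, ?S - ?W}" unfolding cuts_compatible_def cuts_cross_def ceq by auto
  moreover have "cuts_compatible {?W, ?S - ?W} d" unfolding cuts_compatible_def cuts_cross_def deq by auto
  ultimately show ?thesis using n1 n2 c d w unfolding cut_adj_def cut_vertices_def by (metis mem_Collect_eq)
qed

lemma dist2:
  assumes c: "c \<in> cut_vertices E" and d: "d \<in> cut_vertices E"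
    and big: "infinite (topspace E) \<or> card (topspace E) \<ge> 5"
  shows "\<exists>n\<le>2. cut_walk E c d n"
proof -
  let ?S = "topspace E"
  have cn: "nonperipheral_cut E c" and dn: "nonperipheral_cut E d" using c d by (auto simp: cut_vertices_def)
  show ?thesis
  proof (cases "c = d")
    case True
    hence "cut_walk E c d 0" unfolding cut_walk_def using c by (intro exI[of _ "\<lambda>_. c"]) auto
    thus ?thesis by (intro exI[of _ 0]) simp
  next
    case neq: False
    show ?thesis
    proof (cases "cuts_compatible c d")
      case True
      hence "cut_walk E c d 1" unfolding cut_walk_def using c d neq
        by (intro exI[of _ "\<lambda>i. if i = 0 then c else d"]) (auto simp: cut_adj_def)
      thus ?thesis by (intro exI[of _ 1]) simp
    next
      case False
      hence cr: "cuts_cross c d" by (simp add: cuts_compatible_def)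
      obtain A B where A: "A \<in> c" and B: "B \<in> d" using cn dn unfolding nonperipheral_cut_def by blast
      note cA = np_cutD[OF cn A] and dB = np_cutD[OF dn B]
      have ceq: "c = {A, ?S - A}" and deq: "d = {B, ?S - B}" using cA dB by auto
      have "\<exists>A'\<in>c. \<exists>B'\<in>d. \<exists>x y. x \<in> A' \<inter> B' \<and> y \<in> A' \<inter> B' \<and> x \<noteq> y"
      proof (rule ccontr)
        assume no: "\<not> ?thesis"
        have no': "\<And>A' B' x y. A' \<in> c \<Longrightarrow> B' \<in> d \<Longrightarrow> x \<in> A' \<inter> B' \<Longrightarrow> y \<in> A' \<inter> B' \<Longrightarrow> x = y"
          using no by blast
        have m: "A \<in> c" "?S - A \<in> c" "B \<in> d" "?S - B \<in> d" using ceq deq by auto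
        have q1: "\<forall>x\<in>A \<inter> B. \<forall>y\<in>A \<inter> B. x = y" using no'[OF m(1) m(3)] by blast
        have q2: "\<forall>x\<in>A \<inter> (?S - B). \<forall>y\<in>A \<inter> (?S - B). x = y" using no'[OF m(1) m(4)] by blast
        have q3: "\<forall>x\<in>(?S - A) \<inter> B. \<forall>y\<in>(?S - A) \<inter> B. x = y" using no'[OF m(2) m(3)] by blast
        have q4: "\<forall>x\<in>(?S - A) \<inter> (?S - B). \<forall>y\<in>(?S - A) \<inter> (?S - B). x = y" using no'[OF m(2) m(4)] by blast
        obtain a1 a2 a3 a4 where a: "a1 \<in> A \<inter> B" "a2 \<in> A \<inter> (?S - B)" "a3 \<in> (?S - A) \<inter> B"
           "a4 \<in> (?S - A) \<inter> (?S - B)"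
          using cr ceq deq unfolding cuts_cross_def by (simp add: ex_in_conv[symmetric]) blast
        have sub: "?S \<subseteq> {a1, a2, a3, a4}"
        proof
          fix z assume z: "z \<in> ?S"
          show "z \<in> {a1, a2, a3, a4}"
          proof (cases "z \<in> A"; cases "z \<in> B")
            assume "z \<in> A" "z \<in> B" thus ?thesis using q1 a(1) by blast
          next
            assume "z \<in> A" "z \<notin> B" thus ?thesis using q2 a(2) z by blast
          next
            assume "z \<notin> A" "z \<in> B" thus ?thesis using q3 a(3) z by blast
          next
            assume "z \<notin> A" "z \<notin> B" thus ?thesis using q4 a(4) z by blast
          qed
        qed
        have c4: "card {a1, a2, a3, a4} \<le> 4"
          using card_length[of "[a1, a2, a3, a4]"] by simp
        have fin: "finite ?S" by (rule finite_subset[OF sub]) simp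
        have "card ?S \<le> card {a1, a2, a3, a4}" by (rule card_mono[OF _ sub]) simp
        with c4 have "card ?S \<le> 4" by linarith
        thus False using big fin by auto
      qed
      then obtain A' B' x y where "A' \<in> c" "B' \<in> d" "x \<in> A' \<inter> B'" "y \<in> A' \<inter> B'" "x \<noteq> y" by blast
      from mid[OF cn dn cr this] obtain w where w: "cut_adj E c w" "cut_adj E w d" by blast
      have "cut_walk E c d 2" unfolding cut_walk_def using w c d
        apply (intro exI[of _ "\<lambda>i. if i = 0 then c else if i = 1 then w else d"])
        apply (simp add: numeral_2_eq_2 le_Suc_eq less_Suc_eq cut_adj_def)
        done
      thus ?thesis by (intro exI[of _ 2]) simp
    qed
  qed
qed

lemma four_pts:
  assumes inf: "infinite S"
  shows "\<exists>x1 x2 x3 x4. x1 \<in> S \<and> x2 \<in> S \<and> x3 \<in> S \<and> x4 \<in> S \<and> x1 \<noteq> x2 \<and> x1 \<noteq> x3 \<and> x1 \<noteq> x4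
     \<and> x2 \<noteq> x3 \<and> x2 \<noteq> x4 \<and> x3 \<noteq> x4"
proof -
  have "S \<noteq> {}" using inf by auto
  then obtain x1 where x1: "x1 \<in> S" by blast
  have "infinite (S - {x1})" by (rule Diff_infinite_finite) (simp_all add: inf)
  hence "S - {x1} \<noteq> {}" by (rule infinite_imp_nonempty)
  then obtain x2 where x2: "x2 \<in> S - {x1}" by blast
  have "infinite (S - {x1, x2})" by (rule Diff_infinite_finite) (simp_all add: inf)
  hence "S - {x1, x2} \<noteq> {}" by (rule infinite_imp_nonempty)
  then obtain x3 where x3: "x3 \<in> S - {x1, x2}" by blast
  have "infinite (S - {x1, x2, x3})" by (rule Diff_infinite_finite) (simp_all add: inf)
  hence "S - {x1, x2, x3} \<noteq> {}" by (rule infinite_imp_nonempty)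
  then obtain x4 where x4: "x4 \<in> S - {x1, x2, x3}" by blast
  show ?thesis using x1 x2 x3 x4 by blast
qed
lemma cross_exists:
  assumes st: "stone_space E" and inf: "infinite (topspace E)"
  shows "\<exists>c d. c \<in> cut_vertices E \<and> d \<in> cut_vertices E \<and> cuts_cross c d"
proof -
  let ?S = "topspace E"
  obtain x1 x2 x3 x4 where x: "x1 \<in> ?S" "x2 \<in> ?S" "x3 \<in> ?S" "x4 \<in> ?S" "x1 \<noteq> x2" "x1 \<noteq> x3" "x1 \<noteq> x4"
     "x2 \<noteq> x3" "x2 \<noteq> x4" "x3 \<noteq> x4" using four_pts[OF inf] by blast
  define Sp where "Sp x y = (SOME T. openin E T \<and> closedin E T \<and> x \<in> T \<and> y \<notin> T)" for x y
  have Sp: "openin E (Sp x y) \<and> closedin E (Sp x y) \<and> x \<in> Sp x y \<and> y \<notin> Sp x y"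
    if "x \<in> ?S" "y \<in> ?S" "x \<noteq> y" for x y
    unfolding Sp_def by (rule someI_ex, rule sep_clopen[OF st that])
  note S13 = Sp[of x1 x3] and S14 = Sp[of x1 x4] and S23 = Sp[of x2 x3] and S24 = Sp[of x2 x4]
   and S12 = Sp[of x1 x2] and S32 = Sp[of x3 x2] and S34 = Sp[of x3 x4]
  define A where "A = (Sp x1 x3 \<inter> Sp x1 x4) \<union> (Sp x2 x3 \<inter> Sp x2 x4)"
  define B where "B = (Sp x1 x2 \<inter> Sp x1 x4) \<union> (Sp x3 x2 \<inter> Sp x3 x4)"
  have d: "x1 \<noteq> x3" "x1 \<noteq> x4" "x2 \<noteq> x3" "x2 \<noteq> x4" "x1 \<noteq> x2" "x3 \<noteq> x2" "x3 \<noteq> x4"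
    and s: "x1 \<in> ?S" "x2 \<in> ?S" "x3 \<in> ?S" "x4 \<in> ?S" using x by auto
  have Ao: "openin E A" "closedin E A" unfolding A_def
    using S13[OF s(1,3) d(1)] S14[OF s(1,4) d(2)] S23[OF s(2,3) d(3)] S24[OF s(2,4) d(4)]
    by (auto intro!: openin_Un openin_Int closedin_Un closedin_Int)
  have Bo: "openin E B" "closedin E B" unfolding B_def
    using S12[OF s(1,2) d(5)] S14[OF s(1,4) d(2)] S32[OF s(3,2) d(6)] S34[OF s(3,4) d(7)]
    by (auto intro!: openin_Un openin_Int closedin_Un closedin_Int)
  have pa: "x1 \<in> A" "x2 \<in> A" "x3 \<notin> A" "x4 \<notin> A" unfolding A_def
    using S13[OF s(1,3) d(1)] S14[OF s(1,4) d(2)] S23[OF s(2,3) d(3)] S24[OF s(2,4) d(4)]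
    by auto
  have pb: "x1 \<in> B" "x3 \<in> B" "x2 \<notin> B" "x4 \<notin> B" unfolding B_def
    using S12[OF s(1,2) d(5)] S14[OF s(1,4) d(2)] S32[OF s(3,2) d(6)] S34[OF s(3,4) d(7)]
    by auto
  have c: "nonperipheral_cut E {A, ?S - A}"
    by (rule np_cutI[OF Ao pa(1) pa(2) d(5), of x3 x4]) (use pa s d in auto)
  have dd: "nonperipheral_cut E {B, ?S - B}"
    by (rule np_cutI[OF Bo pb(1) pb(2) d(1), of x2 x4]) (use pb s d in auto)
  have i1: "A \<inter> B \<noteq> {}" using pa(1) pb(1) by blast
  have i2: "A \<inter> (?S - B) \<noteq> {}" using pa(2) pb(3) s(2) by blast
  have i3: "(?S - A) \<inter> B \<noteq> {}" using pa(3) pb(2) s(3) by blast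
  have i4: "(?S - A) \<inter> (?S - B) \<noteq> {}" using pa(4) pb(4) s(4) by blast
  have "cuts_cross {A, ?S - A} {B, ?S - B}"
    unfolding cuts_cross_def using i1 i2 i3 i4 by (simp add: Int_commute)
  moreover have "{A, ?S - A} \<in> cut_vertices E" "{B, ?S - B} \<in> cut_vertices E"
    using c dd unfolding cut_vertices_def by simp_all
  ultimately show ?thesis by blast
qed

lemma walk_ge2:
  assumes cr: "cuts_cross c d" and w: "cut_walk E c d n"
  shows "2 \<le> n"
proof (rule ccontr)
  assume "\<not> 2 \<le> n"
  hence "n = 0 \<or> n = 1" by auto
  then show False
  proof
    assume n: "n = 0"
    then have "c = d" "c \<in> cut_vertices E" using w unfolding cut_walk_def by auto
    then have "nonperipheral_cut E c" "cuts_cross c c" using cr by (auto simp: cut_vertices_def)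
    then obtain U V where "c = {U, V}" "U \<inter> V = {}" unfolding nonperipheral_cut_def by blast
    then show False using \<open>cuts_cross c c\<close> unfolding cuts_cross_def by blast
  next
    assume n: "n = 1"
    then have "cut_adj E c d" using w unfolding cut_walk_def by force
    then show False using cr by (simp add: cut_adj_def cuts_compatible_def)
  qed
qed


theorem mainTheorem2:
  fixes E :: "'a topology"
  assumes "stone_space E"
    and "infinite (topspace E) \<or> card (topspace E) \<ge> 5"
  shows "cut_graph_connected E \<and>
         (finite (topspace E) \<longrightarrow> cut_graph_diameter E \<le> 4) \<and>
         (infinite (topspace E) \<longrightarrow> cut_graph_diameter E = 2)"
proof -
  note big = assms(2)
  have conn: "cut_graph_connected E" unfolding cut_graph_connected_def
  proof (intro ballI)
    fix c d assume "c \<in> cut_vertices E" "d \<in> cut_vertices E"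
    from dist2[OF this big] show "\<exists>n. cut_walk E c d n" by blast
  qed
  have dle: "cut_dist E c d \<le> 2" if c: "c \<in> cut_vertices E" and d: "d \<in> cut_vertices E" for c d
  proof -
    obtain n where n: "n \<le> 2" "cut_walk E c d n" using dist2[OF c d big] by blast
    have le: "enat n \<le> 2" using n(1) by (simp add: numeral_eq_enat)
    show ?thesis unfolding cut_dist_def by (rule INF_lower2[of n _ enat]) (use n(2) le in simp_all)
  qed
  have diam: "cut_graph_diameter E \<le> 2" unfolding cut_graph_diameter_def
    by (intro SUP_least) (use dle in blast)
  have fin: "cut_graph_diameter E \<le> 4"
    using diam by (rule order_trans) (simp add: numeral_eq_enat)
  have inf: "cut_graph_diameter E = 2" if i: "infinite (topspace E)"
  proof -
    obtain c d where c: "c \<in> cut_vertices E" and d: "d \<in> cut_vertices E" and cr: "cuts_cross c d"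
      using cross_exists[OF assms(1) i] by blast
    have "2 \<le> cut_dist E c d" unfolding cut_dist_def
    proof (rule INF_greatest)
      fix n assume "n \<in> {n. cut_walk E c d n}"
      hence "2 \<le> n" using walk_ge2[OF cr] by blast
      thus "2 \<le> enat n" by (simp add: numeral_eq_enat)
    qed
    also have "cut_dist E c d \<le> cut_graph_diameter E" unfolding cut_graph_diameter_def
      by (rule SUP_upper2[OF c], rule SUP_upper2[OF d]) simp
    finally show ?thesis using diam by (rule antisym[rotated])
  qed
  show ?thesis using conn fin inf by blast
qed

end
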